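(* Let $a,b,c,x,y\in X$ with $a\ge b$, $a\ne b$, $x\ge c$, $x\ne c$, $y\ge c$, $y\ne c$, and $x\ne y$. Then $\tau_{a,b}\,\tau_{[x,y],c}\,\tau_{a,b}^{-1}\in K_{\{a,b,c,x,y\}}$.
   Context: $\Gamma$ is a finite simplicial graph with vertex set $X$, $A_\Gamma$ its right-angled Artin group ($x,y\in X$ commute iff adjacent). $L=X\cup X^{-1}$; for $u\in L$, $\bar u\in X$ is the vertex with $u\in\{\bar u,\bar u^{-1}\}$. $\mathrm{lk}(v)$ is the set of neighbours of $v$, $\mathrm{st}(v)=\mathrm{lk}(v)\cup\{v\}$. Domination: $v\ge w$ iff $\mathrm{lk}(w)\subset\mathrm{st}(v)$; for letters, $u\ge u'$ iff $\bar u\ge\bar u'$. For $u,v\in L$ with $u\ge v$, $\bar u\ne\bar v$, the transvection $\tau_{u,v}$ sends $v\mapsto vu$ and fixes all generators other than $\bar v$. For $u\ge v$, $\bar u\ne\bar v$, $c_{u,\{v\}}$ sends $v\mapsto u^{-1}vu$ and fixes all other generators. For $x,y,c\in L$ with $x,y\ge c$ and $\bar x,\bar y,\bar c$ distinct, $\tau_{[x,y],c}$ sends $c\mapsto c[x,y]$ (with $[x,y]=xyx^{-1}y^{-1}$) and fixes all generators other than $\bar c$. For $Z\subset X$, $K_Z\le\mathrm{Aut}\,A_\Gamma$ is generated by all $\tau_{[x,y],c}$ and all $c_{x,\{c\}}$ with $x,y,c\in Z$ and $x,y\ge c$ (distinct where required), together with all inner automorphisms. *)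

theory Defs
  imports "HOL-Algebra.Algebra"
begin

definition simple_graph :: "'a set \<Rightarrow> ('a \<Rightarrow> 'a \<Rightarrow> bool) \<Rightarrow> bool" where
  "simple_graph V Adj \<longleftrightarrow> finite V \<and> (\<forall>u v. Adj u v \<longrightarrow> u \<in> V \<and> v \<in> V \<and> Adj v u \<and> u \<noteq> v)"

definition lk :: "'a set \<Rightarrow> ('a \<Rightarrow> 'a \<Rightarrow> bool) \<Rightarrow> 'a \<Rightarrow> 'a set" where
  "lk V Adj v = {w \<in> V. Adj v w}"

definition st :: "'a set \<Rightarrow> ('a \<Rightarrow> 'a \<Rightarrow> bool) \<Rightarrow> 'a \<Rightarrow> 'a set" where
  "st V Adj v = insert v (lk V Adj v)"

text \<open>Domination of vertices: v \<ge> w iff lk(w) \<subseteq> st(v).\<close>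
definition dominates :: "'a set \<Rightarrow> ('a \<Rightarrow> 'a \<Rightarrow> bool) \<Rightarrow> 'a \<Rightarrow> 'a \<Rightarrow> bool" where
  "dominates V Adj v w \<longleftrightarrow> lk V Adj w \<subseteq> st V Adj v"

text \<open>A letter is a pair (v, s): (v, True) is the generator v, (v, False) is v^-1.\<close>
type_synonym 'a letter = "'a \<times> bool"
type_synonym 'a word = "'a letter list"

definition letters :: "'a set \<Rightarrow> 'a letter set" where
  "letters V = V \<times> UNIV"

definition bar :: "'a letter \<Rightarrow> 'a" where
  "bar u = fst u"

definition linv :: "'a letter \<Rightarrow> 'a letter" where
  "linv u = (fst u, \<not> snd u)"

definition winv :: "'a word \<Rightarrow> 'a word" where
  "winv w = rev (map linv w)"

definition ldom :: "'a set \<Rightarrow> ('a \<Rightarrow> 'a \<Rightarrow> bool) \<Rightarrow> 'a letter \<Rightarrow> 'a letter \<Rightarrow> bool" where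
  "ldom V Adj u v \<longleftrightarrow> dominates V Adj (bar u) (bar v)"

definition raag_step :: "'a set \<Rightarrow> ('a \<Rightarrow> 'a \<Rightarrow> bool) \<Rightarrow> ('a word \<times> 'a word) set" where
  "raag_step V Adj =
     {(u @ [l, linv l] @ v, u @ v) | u v l.
        set u \<subseteq> letters V \<and> set v \<subseteq> letters V \<and> l \<in> letters V}
   \<union> {(u @ [l1, l2] @ v, u @ [l2, l1] @ v) | u v l1 l2.
        set u \<subseteq> letters V \<and> set v \<subseteq> letters V \<and> l1 \<in> letters V \<and> l2 \<in> letters V
        \<and> Adj (bar l1) (bar l2)}"

definition raag_eq :: "'a set \<Rightarrow> ('a \<Rightarrow> 'a \<Rightarrow> bool) \<Rightarrow> ('a word \<times> 'a word) set" where
  "raag_eq V Adj = (raag_step V Adj \<union> (raag_step V Adj)\<inverse>)\<^sup>*"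

definition cls :: "'a set \<Rightarrow> ('a \<Rightarrow> 'a \<Rightarrow> bool) \<Rightarrow> 'a word \<Rightarrow> 'a word set" where
  "cls V Adj w = raag_eq V Adj `` {w}"

definition RAAG :: "'a set \<Rightarrow> ('a \<Rightarrow> 'a \<Rightarrow> bool) \<Rightarrow> 'a word set monoid" where
  "RAAG V Adj =
     \<lparr>carrier = lists (letters V) // raag_eq V Adj,
      monoid.mult = (\<lambda>A B. \<Union>a\<in>A. \<Union>b\<in>B. cls V Adj (a @ b)),
      monoid.one = cls V Adj []\<rparr>"

definition subst :: "('a \<Rightarrow> 'a word) \<Rightarrow> 'a word \<Rightarrow> 'a word" where
  "subst \<sigma> w = concat (map (\<lambda>l. if snd l then \<sigma> (fst l) else winv (\<sigma> (fst l))) w)"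

definition ind_hom :: "'a set \<Rightarrow> ('a \<Rightarrow> 'a \<Rightarrow> bool) \<Rightarrow> ('a \<Rightarrow> 'a word) \<Rightarrow> 'a word set \<Rightarrow> 'a word set" where
  "ind_hom V Adj \<sigma> = (\<lambda>A \<in> carrier (RAAG V Adj). \<Union>w\<in>A. cls V Adj (subst \<sigma> w))"

definition letter_map :: "'a letter \<Rightarrow> 'a word \<Rightarrow> 'a \<Rightarrow> 'a word" where
  "letter_map v img z = (if z = bar v then (if snd v then img else winv img) else [(z, True)])"

text \<open>Transvection tau_{u,v}: v \<mapsto> v u.\<close>
definition transv :: "'a set \<Rightarrow> ('a \<Rightarrow> 'a \<Rightarrow> bool) \<Rightarrow> 'a letter \<Rightarrow> 'a letter \<Rightarrow> 'a word set \<Rightarrow> 'a word set" where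
  "transv V Adj u v = ind_hom V Adj (letter_map v [v, u])"

text \<open>Partial conjugation c_{u,{v}}: v \<mapsto> u^-1 v u.\<close>
definition pconj :: "'a set \<Rightarrow> ('a \<Rightarrow> 'a \<Rightarrow> bool) \<Rightarrow> 'a letter \<Rightarrow> 'a letter \<Rightarrow> 'a word set \<Rightarrow> 'a word set" where
  "pconj V Adj u v = ind_hom V Adj (letter_map v [linv u, v, u])"

text \<open>Commutator transvection tau_{[x,y],c}: c \<mapsto> c [x,y] = c x y x^-1 y^-1.\<close>
definition ctransv :: "'a set \<Rightarrow> ('a \<Rightarrow> 'a \<Rightarrow> bool) \<Rightarrow> 'a letter \<Rightarrow> 'a letter \<Rightarrow> 'a letter \<Rightarrow> 'a word set \<Rightarrow> 'a word set" where
  "ctransv V Adj x y c = ind_hom V Adj (letter_map c [c, x, y, linv x, linv y])"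

definition inner :: "'a set \<Rightarrow> ('a \<Rightarrow> 'a \<Rightarrow> bool) \<Rightarrow> 'a word set \<Rightarrow> 'a word set \<Rightarrow> 'a word set" where
  "inner V Adj g = (\<lambda>A \<in> carrier (RAAG V Adj).
      inv\<^bsub>RAAG V Adj\<^esub> g \<otimes>\<^bsub>RAAG V Adj\<^esub> A \<otimes>\<^bsub>RAAG V Adj\<^esub> g)"

definition K_gens :: "'a set \<Rightarrow> ('a \<Rightarrow> 'a \<Rightarrow> bool) \<Rightarrow> 'a set \<Rightarrow> ('a word set \<Rightarrow> 'a word set) set" where
  "K_gens V Adj Z =
     {ctransv V Adj x y c | x y c. x \<in> letters V \<and> y \<in> letters V \<and> c \<in> letters V
        \<and> bar x \<in> Z \<and> bar y \<in> Z \<and> bar c \<in> Z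
        \<and> ldom V Adj x c \<and> ldom V Adj y c
        \<and> bar x \<noteq> bar y \<and> bar x \<noteq> bar c \<and> bar y \<noteq> bar c}
   \<union> {pconj V Adj x c | x c. x \<in> letters V \<and> c \<in> letters V
        \<and> bar x \<in> Z \<and> bar c \<in> Z \<and> ldom V Adj x c \<and> bar x \<noteq> bar c}
   \<union> {inner V Adj g | g. g \<in> carrier (RAAG V Adj)}"

definition K :: "'a set \<Rightarrow> ('a \<Rightarrow> 'a \<Rightarrow> bool) \<Rightarrow> 'a set \<Rightarrow> ('a word set \<Rightarrow> 'a word set) set" where
  "K V Adj Z = generate (AutoGroup (RAAG V Adj)) (K_gens V Adj Z)"

end

theory Submission
  imports Defs
begin



lemma letters_iff[simp]: "l \<in> letters V \<longleftrightarrow> fst l \<in> V"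
  by (cases l) (auto simp: letters_def)

lemma linv_linv[simp]: "linv (linv l) = l" by (simp add: linv_def)
lemma fst_linv[simp]: "fst (linv l) = fst l" by (simp add: linv_def)
lemma snd_linv[simp]: "snd (linv l) = (\<not> snd l)" by (simp add: linv_def)
lemma linv_neq[simp]: "linv l \<noteq> l" "l \<noteq> linv l" by (auto simp: linv_def prod_eq_iff)
lemma winv_Nil[simp]: "winv [] = []" by (simp add: winv_def)
lemma winv_Cons[simp]: "winv (l # w) = winv w @ [linv l]" by (simp add: winv_def)
lemma winv_append[simp]: "winv (u @ w) = winv w @ winv u" by (simp add: winv_def)
lemma winv_winv[simp]: "winv (winv w) = w" by (induction w) auto
lemma set_winv[simp]: "set (winv w) = linv ` set w" by (simp add: winv_def)
lemma winv_W[simp]: "winv w \<in> lists (letters V) \<longleftrightarrow> w \<in> lists (letters V)"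
  by (auto simp: winv_def in_lists_conv_set)

lemma step_W: "(u, v) \<in> raag_step V Adj \<Longrightarrow> u \<in> lists (letters V) \<and> v \<in> lists (letters V)"
  unfolding raag_step_def in_lists_conv_set by (auto simp: letters_def bar_def linv_def simp del: letters_iff)

lemma E_refl: "(w, w) \<in> raag_eq V Adj" by (simp add: raag_eq_def)
lemma E_sym: "(u, v) \<in> raag_eq V Adj \<Longrightarrow> (v, u) \<in> raag_eq V Adj"
proof -
  assume "(u, v) \<in> raag_eq V Adj"
  then show ?thesis unfolding raag_eq_def
  proof (induction rule: rtrancl_induct)
    case base then show ?case by simp
  next
    case (step y z)
    then have "(z, y) \<in> (raag_step V Adj \<union> (raag_step V Adj)\<inverse>)\<^sup>*" by auto
    then show ?case using step.IH by (rule rtrancl_trans)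
  qed
qed
lemma E_trans: "(u, v) \<in> raag_eq V Adj \<Longrightarrow> (v, w) \<in> raag_eq V Adj \<Longrightarrow> (u, w) \<in> raag_eq V Adj"
  unfolding raag_eq_def by (rule rtrancl_trans)

lemma E_W: "(u, v) \<in> raag_eq V Adj \<Longrightarrow> u \<in> lists (letters V) \<Longrightarrow> v \<in> lists (letters V)"
  unfolding raag_eq_def
  by (induction rule: rtrancl_induct) (auto dest: step_W)

lemma step_ctx: "(u, v) \<in> raag_step V Adj \<Longrightarrow> p \<in> lists (letters V) \<Longrightarrow> q \<in> lists (letters V)
  \<Longrightarrow> (p @ u @ q, p @ v @ q) \<in> raag_step V Adj"
  unfolding raag_step_def
  apply (elim UnE CollectE exE conjE)
   apply (rule UnI1, rule CollectI)
   apply (rule_tac x="p @ ua" in exI, rule_tac x="va @ q" in exI, rule_tac x=l in exI, force)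
  apply (rule UnI2, rule CollectI)
  apply (rule_tac x="p @ ua" in exI, rule_tac x="va @ q" in exI, rule_tac x=l1 in exI, rule_tac x=l2 in exI, force)
  done

lemma E_ctx: "(u, v) \<in> raag_eq V Adj \<Longrightarrow> p \<in> lists (letters V) \<Longrightarrow> q \<in> lists (letters V)
  \<Longrightarrow> (p @ u @ q, p @ v @ q) \<in> raag_eq V Adj"
  unfolding raag_eq_def
proof (induction rule: rtrancl_induct)
  case base then show ?case by simp
next
  case (step y z)
  then have "(p @ y @ q, p @ z @ q) \<in> raag_step V Adj \<union> (raag_step V Adj)\<inverse>"
    using step_ctx by blast
  with step show ?case by (meson rtrancl.rtrancl_into_rtrancl)
qed

lemma E_cong: "(u, u') \<in> raag_eq V Adj \<Longrightarrow> (v, v') \<in> raag_eq V Adj \<Longrightarrow> u \<in> lists (letters V)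
  \<Longrightarrow> v \<in> lists (letters V) \<Longrightarrow> (u @ v, u' @ v') \<in> raag_eq V Adj"
proof -
  assume a: "(u, u') \<in> raag_eq V Adj" "(v, v') \<in> raag_eq V Adj" "u \<in> lists (letters V)" "v \<in> lists (letters V)"
  have uW: "u' \<in> lists (letters V)" using E_W[OF a(1) a(3)] .
  have 1: "(u @ v, u' @ v) \<in> raag_eq V Adj" using E_ctx[OF a(1), of "[]" v] a(4) by simp
  have 2: "(u' @ v, u' @ v') \<in> raag_eq V Adj" using E_ctx[OF a(2), of u' "[]"] uW by simp
  show ?thesis by (rule E_trans[OF 1 2])
qed

lemma E_cancel: "fst l \<in> V \<Longrightarrow> ([l, linv l], []) \<in> raag_eq V Adj"
proof -
  assume a: "fst l \<in> V"
  have "([] @ [l, linv l] @ [], [] @ []) \<in> raag_step V Adj"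
    unfolding raag_step_def
    apply (rule UnI1, rule CollectI)
    apply (rule exI[where x="[]"], rule exI[where x="[]"], rule exI[where x=l])
    using a by simp
  then have "([l, linv l], []) \<in> raag_step V Adj" by simp
  then show ?thesis unfolding raag_eq_def by (rule r_into_rtrancl[OF UnI1])
qed

lemma E_comm: "fst l1 \<in> V \<Longrightarrow> fst l2 \<in> V \<Longrightarrow> Adj (fst l1) (fst l2) \<Longrightarrow> ([l1, l2], [l2, l1]) \<in> raag_eq V Adj"
proof -
  assume a: "fst l1 \<in> V" "fst l2 \<in> V" "Adj (fst l1) (fst l2)"
  have "([] @ [l1, l2] @ [], [] @ [l2, l1] @ []) \<in> raag_step V Adj"
    unfolding raag_step_def
    apply (rule UnI2, rule CollectI)
    apply (rule exI[where x="[]"], rule exI[where x="[]"], rule exI[where x=l1], rule exI[where x=l2])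
    using a by (simp add: bar_def)
  then have "([l1, l2], [l2, l1]) \<in> raag_step V Adj" by simp
  then show ?thesis unfolding raag_eq_def by (rule r_into_rtrancl[OF UnI1])
qed

definition comm_ok :: "('a \<Rightarrow> 'a \<Rightarrow> bool) \<Rightarrow> 'a word \<Rightarrow> 'a word \<Rightarrow> bool" where
  "comm_ok Adj u w \<longleftrightarrow> (\<forall>l\<in>set u. \<forall>m\<in>set w. fst l = fst m \<or> Adj (fst l) (fst m))"

lemma E_letter_comm: "fst l \<in> V \<Longrightarrow> fst m \<in> V \<Longrightarrow> fst l = fst m \<or> Adj (fst l) (fst m)
  \<Longrightarrow> ([l, m], [m, l]) \<in> raag_eq V Adj"
proof -
  assume a: "fst l \<in> V" "fst m \<in> V" "fst l = fst m \<or> Adj (fst l) (fst m)"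
  show ?thesis
  proof (cases "Adj (fst l) (fst m)")
    case True then show ?thesis using E_comm a by blast
  next
    case False
    then have "fst l = fst m" using a by blast
    then have "m = l \<or> m = linv l" by (cases l, cases m, auto simp: linv_def)
    then show ?thesis
    proof
      assume ml: "m = l" show ?thesis unfolding ml by (rule E_refl)
    next
      assume m: "m = linv l"
      have h1: "([l, m], []) \<in> raag_eq V Adj" unfolding m using E_cancel[of l V Adj] a(1) by blast
      have h2: "([m, l], []) \<in> raag_eq V Adj" unfolding m using E_cancel[of "linv l" V Adj] a(1) by simp
      show ?thesis by (rule E_trans[OF h1 E_sym[OF h2]])
    qed
  qed
qed

lemma E_comm_letter_word: "fst l \<in> V \<Longrightarrow> w \<in> lists (letters V) \<Longrightarrow>
   (\<forall>m\<in>set w. fst l = fst m \<or> Adj (fst l) (fst m)) \<Longrightarrow> (l # w, w @ [l]) \<in> raag_eq V Adj"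
proof (induction w)
  case Nil then show ?case by (simp add: E_refl)
next
  case (Cons m w)
  have mV: "fst m \<in> V" using Cons.prems(2) by simp
  have lmr: "fst l = fst m \<or> Adj (fst l) (fst m)" using Cons.prems(3) by simp
  have lm: "([l, m], [m, l]) \<in> raag_eq V Adj" by (rule E_letter_comm[of l V m Adj, OF Cons.prems(1) mV lmr])
  have h1: "([l, m] @ w, [m, l] @ w) \<in> raag_eq V Adj"
    by (rule E_cong[OF lm E_refl]) (use Cons.prems in auto)
  have ih: "(l # w, w @ [l]) \<in> raag_eq V Adj" using Cons.prems Cons.IH by auto
  have h2: "([m] @ (l # w), [m] @ (w @ [l])) \<in> raag_eq V Adj"
    by (rule E_cong[OF E_refl ih]) (use Cons.prems in auto)
  have h1': "(l # m # w, m # l # w) \<in> raag_eq V Adj" using h1 by simp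
  have h2': "(m # l # w, m # w @ [l]) \<in> raag_eq V Adj" using h2 by simp
  show ?case using E_trans[OF h1' h2'] by simp
qed

lemma E_comm_ok: "u \<in> lists (letters V) \<Longrightarrow> w \<in> lists (letters V) \<Longrightarrow> comm_ok Adj u w
  \<Longrightarrow> (u @ w, w @ u) \<in> raag_eq V Adj"
proof (induction u)
  case Nil then show ?case by (simp add: E_refl)
next
  case (Cons l u)
  have ih: "(u @ w, w @ u) \<in> raag_eq V Adj" using Cons.prems Cons.IH by (auto simp: comm_ok_def)
  have h1: "([l] @ (u @ w), [l] @ (w @ u)) \<in> raag_eq V Adj"
    by (rule E_cong[OF E_refl ih]) (use Cons.prems in auto)
  have lw: "(l # w, w @ [l]) \<in> raag_eq V Adj" using Cons.prems by (intro E_comm_letter_word) (auto simp: comm_ok_def)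
  have h2: "((l # w) @ u, (w @ [l]) @ u) \<in> raag_eq V Adj"
    by (rule E_cong[OF lw E_refl]) (use Cons.prems in auto)
  have h1': "(l # u @ w, l # w @ u) \<in> raag_eq V Adj" using h1 by simp
  have h2': "(l # w @ u, w @ l # u) \<in> raag_eq V Adj" using h2 by simp
  show ?case using E_trans[OF h1' h2'] by simp
qed

fun fred :: "'a word \<Rightarrow> 'a word" where
  "fred [] = []"
| "fred (l # w) = (case fred w of [] \<Rightarrow> [l] | m # r \<Rightarrow> if m = linv l then r else l # m # r)"

lemma fred_E: "w \<in> lists (letters V) \<Longrightarrow> fred w \<in> lists (letters V) \<and> (w, fred w) \<in> raag_eq V Adj"
proof (induction w)
  case Nil then show ?case by (simp add: E_refl)
next
  case (Cons l w)
  have lV: "fst l \<in> V" and wW: "w \<in> lists (letters V)" using Cons.prems by auto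
  have IH1: "fred w \<in> lists (letters V)" and IH2: "(w, fred w) \<in> raag_eq V Adj" using Cons.IH wW by auto
  have 1: "([l] @ w, [l] @ fred w) \<in> raag_eq V Adj"
    by (rule E_cong[OF E_refl IH2]) (use lV wW in auto)
  show ?case
  proof (cases "fred w")
    case Nil then show ?thesis using 1 lV by simp
  next
    case C: (Cons m r)
    have rW: "r \<in> lists (letters V)" and mV: "fst m \<in> V" using IH1 C by auto
    show ?thesis
    proof (cases "m = linv l")
      case True
      have "([l, linv l] @ r, [] @ r) \<in> raag_eq V Adj"
        by (rule E_cong[OF E_cancel[OF lV] E_refl]) (use lV rW in auto)
      then have "(l # m # r, r) \<in> raag_eq V Adj" unfolding True by simp
      moreover have "(l # w, l # m # r) \<in> raag_eq V Adj" using 1 C by simp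
      ultimately have "(l # w, r) \<in> raag_eq V Adj" by (metis E_trans)
      then show ?thesis using C rW unfolding True by simp
    next
      case False then show ?thesis using 1 C lV IH1 by simp
    qed
  qed
qed

lemma E_by_fred: "u \<in> lists (letters V) \<Longrightarrow> w \<in> lists (letters V) \<Longrightarrow> fred u = fred w
  \<Longrightarrow> (u, w) \<in> raag_eq V Adj"
proof -
  assume a: "u \<in> lists (letters V)" "w \<in> lists (letters V)" "fred u = fred w"
  have 1: "(u, fred u) \<in> raag_eq V Adj" using fred_E[OF a(1)] by blast
  have "(w, fred w) \<in> raag_eq V Adj" using fred_E[OF a(2)] by blast
  then have 2: "(fred u, w) \<in> raag_eq V Adj" using a(3) by (simp add: E_sym)
  show ?thesis using E_trans[OF 1 2] .
qed




declare in_listsD [rule del] in_listspD [rule del] in_listsI [rule del] in_listspI [rule del]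

lemma cls_eq_iff: "cls V Adj u = cls V Adj w \<longleftrightarrow> (u, w) \<in> raag_eq V Adj"
proof
  assume a: "cls V Adj u = cls V Adj w"
  have "w \<in> cls V Adj w" by (simp add: cls_def E_refl)
  then have "w \<in> cls V Adj u" using a by simp
  then show "(u, w) \<in> raag_eq V Adj" unfolding cls_def by blast
next
  assume a: "(u, w) \<in> raag_eq V Adj"
  show "cls V Adj u = cls V Adj w"
    unfolding cls_def using E_trans[OF a] E_trans[OF E_sym[OF a]] by blast
qed

lemma cls_self: "w \<in> cls V Adj w" by (simp add: cls_def E_refl)

lemma carrier_RAAG: "carrier (RAAG V Adj) = {cls V Adj w | w. w \<in> lists (letters V)}"
  by (auto simp: RAAG_def quotient_def cls_def)

lemma cls_in_carrier: "w \<in> lists (letters V) \<Longrightarrow> cls V Adj w \<in> carrier (RAAG V Adj)"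
  by (auto simp: carrier_RAAG)

lemma mem_cls_W: "w \<in> lists (letters V) \<Longrightarrow> w' \<in> cls V Adj w \<Longrightarrow> w' \<in> lists (letters V)"
  by (metis E_W Image_singleton_iff cls_def)

lemma mult_cls: "u \<in> lists (letters V) \<Longrightarrow> v \<in> lists (letters V) \<Longrightarrow>
  cls V Adj u \<otimes>\<^bsub>RAAG V Adj\<^esub> cls V Adj v = cls V Adj (u @ v)"
proof -
  assume uv: "u \<in> lists (letters V)" "v \<in> lists (letters V)"
  have "\<And>a b. a \<in> cls V Adj u \<Longrightarrow> b \<in> cls V Adj v \<Longrightarrow> cls V Adj (a @ b) = cls V Adj (u @ v)"
  proof -
    fix a b assume "a \<in> cls V Adj u" "b \<in> cls V Adj v"
    then have "(u, a) \<in> raag_eq V Adj" "(v, b) \<in> raag_eq V Adj" by (auto simp: cls_def)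
    then have "(u @ v, a @ b) \<in> raag_eq V Adj" using E_cong[OF _ _ uv] by blast
    then show "cls V Adj (a @ b) = cls V Adj (u @ v)" unfolding cls_eq_iff by (rule E_sym)
  qed
  then have "(\<Union>a\<in>cls V Adj u. \<Union>b\<in>cls V Adj v. cls V Adj (a @ b))
     = (\<Union>a\<in>cls V Adj u. \<Union>b\<in>cls V Adj v. cls V Adj (u @ v))"
    by (intro SUP_cong refl) simp
  also have "\<dots> = cls V Adj (u @ v)"
    using cls_self[of u V Adj] cls_self[of v V Adj] by blast
  finally show ?thesis by (simp add: RAAG_def)
qed

lemma one_RAAG: "\<one>\<^bsub>RAAG V Adj\<^esub> = cls V Adj []" by (simp add: RAAG_def)

lemma winv_cancel: "u \<in> lists (letters V) \<Longrightarrow> (u @ winv u, []) \<in> raag_eq V Adj"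
proof (induction u)
  case Nil then show ?case by (simp add: E_refl)
next
  case (Cons l u)
  have ih: "(u @ winv u, []) \<in> raag_eq V Adj" using Cons by auto
  have h1: "([l] @ (u @ winv u) @ [linv l], [l] @ [] @ [linv l]) \<in> raag_eq V Adj"
    by (rule E_ctx[OF ih]) (use Cons.prems in auto)
  have h2: "([l, linv l], []) \<in> raag_eq V Adj" using Cons.prems by (intro E_cancel) auto
  have h1': "(l # u @ winv u @ [linv l], [l, linv l]) \<in> raag_eq V Adj" using h1 by simp
  show ?case using E_trans[OF h1' h2] by simp
qed

lemma winv_cancel2: "u \<in> lists (letters V) \<Longrightarrow> (winv u @ u, []) \<in> raag_eq V Adj"
  using winv_cancel[of "winv u" V Adj] by simp

lemma group_RAAG: "group (RAAG V Adj)"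
proof (rule groupI)
  fix x y assume "x \<in> carrier (RAAG V Adj)" "y \<in> carrier (RAAG V Adj)"
  then show "x \<otimes>\<^bsub>RAAG V Adj\<^esub> y \<in> carrier (RAAG V Adj)"
    by (auto simp: carrier_RAAG mult_cls)
next
  show "\<one>\<^bsub>RAAG V Adj\<^esub> \<in> carrier (RAAG V Adj)" by (auto simp: one_RAAG carrier_RAAG)
next
  fix x y z assume "x \<in> carrier (RAAG V Adj)" "y \<in> carrier (RAAG V Adj)" "z \<in> carrier (RAAG V Adj)"
  then show "x \<otimes>\<^bsub>RAAG V Adj\<^esub> y \<otimes>\<^bsub>RAAG V Adj\<^esub> z = x \<otimes>\<^bsub>RAAG V Adj\<^esub> (y \<otimes>\<^bsub>RAAG V Adj\<^esub> z)"
    by (auto simp: carrier_RAAG mult_cls)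
next
  fix x assume "x \<in> carrier (RAAG V Adj)"
  then show "\<one>\<^bsub>RAAG V Adj\<^esub> \<otimes>\<^bsub>RAAG V Adj\<^esub> x = x"
    by (auto simp: carrier_RAAG mult_cls one_RAAG)
next
  fix x assume "x \<in> carrier (RAAG V Adj)"
  then obtain u where u: "u \<in> lists (letters V)" "x = cls V Adj u" by (auto simp: carrier_RAAG)
  then have "cls V Adj (winv u) \<otimes>\<^bsub>RAAG V Adj\<^esub> x = \<one>\<^bsub>RAAG V Adj\<^esub>"
    by (simp add: mult_cls one_RAAG cls_eq_iff winv_cancel2)
  moreover have "cls V Adj (winv u) \<in> carrier (RAAG V Adj)" using u by (simp add: cls_in_carrier)
  ultimately show "\<exists>y\<in>carrier (RAAG V Adj). y \<otimes>\<^bsub>RAAG V Adj\<^esub> x = \<one>\<^bsub>RAAG V Adj\<^esub>" by blast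
qed

lemma inv_cls: "u \<in> lists (letters V) \<Longrightarrow> inv\<^bsub>RAAG V Adj\<^esub> (cls V Adj u) = cls V Adj (winv u)"
  by (rule group.inv_equality[OF group_RAAG])
     (simp_all add: mult_cls one_RAAG cls_eq_iff winv_cancel2 cls_in_carrier)

lemma winv_E: "(u, u') \<in> raag_eq V Adj \<Longrightarrow> u \<in> lists (letters V) \<Longrightarrow> (winv u, winv u') \<in> raag_eq V Adj"
proof -
  assume a: "(u, u') \<in> raag_eq V Adj" "u \<in> lists (letters V)"
  then have "u' \<in> lists (letters V)" by (rule E_W)
  then show ?thesis using a inv_cls[of u V Adj] inv_cls[of u' V Adj]
    by (metis cls_eq_iff)
qed




declare in_listsD [rule del] in_listspD [rule del] in_listsI [rule del] in_listspI [rule del]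

lemma subst_Nil[simp]: "subst \<sigma> [] = []" by (simp add: subst_def)
lemma subst_Cons[simp]: "subst \<sigma> (l # w) = (if snd l then \<sigma> (fst l) else winv (\<sigma> (fst l))) @ subst \<sigma> w"
  by (simp add: subst_def)
lemma subst_append[simp]: "subst \<sigma> (u @ w) = subst \<sigma> u @ subst \<sigma> w" by (simp add: subst_def)
lemma subst_winv[simp]: "subst \<sigma> (winv u) = winv (subst \<sigma> u)"
  by (induction u) auto

definition imgW :: "'a set \<Rightarrow> ('a \<Rightarrow> 'a word) \<Rightarrow> bool" where
  "imgW V \<sigma> \<longleftrightarrow> (\<forall>z\<in>V. \<sigma> z \<in> lists (letters V))"

lemma subst_W: "imgW V \<sigma> \<Longrightarrow> w \<in> lists (letters V) \<Longrightarrow> subst \<sigma> w \<in> lists (letters V)"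
  by (induction w) (auto simp: imgW_def)

lemma subst_subst: "subst \<sigma> (subst \<rho> w) = subst (\<lambda>z. subst \<sigma> (\<rho> z)) w"
  by (induction w) auto

lemma subst_id: "subst (\<lambda>z. [(z, True)]) w = w"
  by (induction w) (auto simp: linv_def)

lemma subst_E_pointwise: "imgW V \<sigma> \<Longrightarrow> imgW V \<sigma>' \<Longrightarrow> (\<forall>z\<in>V. (\<sigma> z, \<sigma>' z) \<in> raag_eq V Adj) \<Longrightarrow>
   w \<in> lists (letters V) \<Longrightarrow> (subst \<sigma> w, subst \<sigma>' w) \<in> raag_eq V Adj"
proof (induction w)
  case Nil then show ?case by (simp add: E_refl)
next
  case (Cons l w)
  have z: "fst l \<in> V" using Cons by auto
  have 1: "((if snd l then \<sigma> (fst l) else winv (\<sigma> (fst l))), (if snd l then \<sigma>' (fst l) else winv (\<sigma>' (fst l)))) \<in> raag_eq V Adj"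
    using Cons.prems z winv_E[of "\<sigma> (fst l)" "\<sigma>' (fst l)" V Adj] by (auto simp: imgW_def)
  have 2: "(if snd l then \<sigma> (fst l) else winv (\<sigma> (fst l))) \<in> lists (letters V)"
    using Cons.prems z by (auto simp: imgW_def)
  show ?case using E_cong[OF 1 Cons.IH 2] Cons.prems subst_W[of V \<sigma> w] by auto
qed

definition valid :: "'a set \<Rightarrow> ('a \<Rightarrow> 'a \<Rightarrow> bool) \<Rightarrow> ('a \<Rightarrow> 'a word) \<Rightarrow> bool" where
  "valid V Adj \<sigma> \<longleftrightarrow> imgW V \<sigma> \<and>
     (\<forall>w w'. w \<in> lists (letters V) \<longrightarrow> (w, w') \<in> raag_eq V Adj \<longrightarrow> (subst \<sigma> w, subst \<sigma> w') \<in> raag_eq V Adj)"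

lemma ind_hom_cls: "valid V Adj \<sigma> \<Longrightarrow> w \<in> lists (letters V) \<Longrightarrow>
  ind_hom V Adj \<sigma> (cls V Adj w) = cls V Adj (subst \<sigma> w)"
proof -
  assume v: "valid V Adj \<sigma>" and w: "w \<in> lists (letters V)"
  have H: "\<And>w'. w' \<in> cls V Adj w \<Longrightarrow> cls V Adj (subst \<sigma> w') = cls V Adj (subst \<sigma> w)"
  proof -
    fix w' assume "w' \<in> cls V Adj w"
    then have "(w, w') \<in> raag_eq V Adj" by (simp add: cls_def)
    then have "(subst \<sigma> w, subst \<sigma> w') \<in> raag_eq V Adj" using v w by (simp add: valid_def)
    then show "cls V Adj (subst \<sigma> w') = cls V Adj (subst \<sigma> w)" unfolding cls_eq_iff by (rule E_sym)
  qed
  have "(\<Union>w'\<in>cls V Adj w. cls V Adj (subst \<sigma> w')) = (\<Union>w'\<in>cls V Adj w. cls V Adj (subst \<sigma> w))"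
    by (intro SUP_cong refl H)
  also have "\<dots> = cls V Adj (subst \<sigma> w)" using cls_self[of w V Adj] by blast
  finally show ?thesis unfolding ind_hom_def using cls_in_carrier[OF w] by simp
qed

lemma ind_hom_ext: "ind_hom V Adj \<sigma> \<in> extensional (carrier (RAAG V Adj))"
  by (simp add: ind_hom_def)

lemma valid_comp: "valid V Adj \<sigma> \<Longrightarrow> valid V Adj \<rho> \<Longrightarrow> valid V Adj (\<lambda>z. subst \<sigma> (\<rho> z))"
proof -
  assume s: "valid V Adj \<sigma>" and r: "valid V Adj \<rho>"
  have iS: "imgW V \<sigma>" and ir: "imgW V \<rho>" using s r by (auto simp: valid_def)
  have "imgW V (\<lambda>z. subst \<sigma> (\<rho> z))" unfolding imgW_def
  proof
    fix z assume "z \<in> V"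
    then have "\<rho> z \<in> lists (letters V)" using ir by (simp add: imgW_def)
    then show "subst \<sigma> (\<rho> z) \<in> lists (letters V)" by (rule subst_W[OF iS])
  qed
  moreover have "\<forall>w w'. w \<in> lists (letters V) \<longrightarrow> (w, w') \<in> raag_eq V Adj \<longrightarrow>
     (subst (\<lambda>z. subst \<sigma> (\<rho> z)) w, subst (\<lambda>z. subst \<sigma> (\<rho> z)) w') \<in> raag_eq V Adj"
  proof (intro allI impI)
    fix w w' assume w: "w \<in> lists (letters V)" and e: "(w, w') \<in> raag_eq V Adj"
    have 1: "(subst \<rho> w, subst \<rho> w') \<in> raag_eq V Adj" using r w e by (simp add: valid_def)
    have 2: "subst \<rho> w \<in> lists (letters V)" by (rule subst_W[OF ir w])
    have "(subst \<sigma> (subst \<rho> w), subst \<sigma> (subst \<rho> w')) \<in> raag_eq V Adj"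
      using s 1 2 by (simp add: valid_def)
    then show "(subst (\<lambda>z. subst \<sigma> (\<rho> z)) w, subst (\<lambda>z. subst \<sigma> (\<rho> z)) w') \<in> raag_eq V Adj"
      by (simp add: subst_subst)
  qed
  ultimately show ?thesis by (simp add: valid_def)
qed

lemma carrier_obtain: "A \<in> carrier (RAAG V Adj) \<Longrightarrow> (\<And>w. w \<in> lists (letters V) \<Longrightarrow> A = cls V Adj w \<Longrightarrow> P) \<Longrightarrow> P"
  unfolding carrier_RAAG by blast

lemma valid_imgW: "valid V Adj \<sigma> \<Longrightarrow> imgW V \<sigma>" by (simp add: valid_def)

lemma valid_id: "valid V Adj (\<lambda>z. [(z, True)])"
  unfolding valid_def imgW_def subst_id by (simp add: in_lists_conv_set)

lemma ind_hom_id: "ind_hom V Adj (\<lambda>z. [(z, True)]) = (\<lambda>A \<in> carrier (RAAG V Adj). A)"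
proof (rule extensionalityI[OF ind_hom_ext])
  show "(\<lambda>A \<in> carrier (RAAG V Adj). A) \<in> extensional (carrier (RAAG V Adj))" by simp
  fix A assume "A \<in> carrier (RAAG V Adj)"
  then obtain w where w: "w \<in> lists (letters V)" "A = cls V Adj w" by (rule carrier_obtain)
  show "ind_hom V Adj (\<lambda>z. [(z, True)]) A = (\<lambda>A \<in> carrier (RAAG V Adj). A) A"
    using w ind_hom_cls[OF valid_id w(1)] cls_in_carrier[OF w(1)] by (simp add: subst_id)
qed

lemma ind_hom_compose: "valid V Adj \<sigma> \<Longrightarrow> valid V Adj \<rho> \<Longrightarrow>
  compose (carrier (RAAG V Adj)) (ind_hom V Adj \<sigma>) (ind_hom V Adj \<rho>) = ind_hom V Adj (\<lambda>z. subst \<sigma> (\<rho> z))"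
proof (rule extensionalityI[OF _ ind_hom_ext])
  assume s: "valid V Adj \<sigma>" and r: "valid V Adj \<rho>"
  show "compose (carrier (RAAG V Adj)) (ind_hom V Adj \<sigma>) (ind_hom V Adj \<rho>) \<in> extensional (carrier (RAAG V Adj))"
    by (simp add: compose_def)
  fix A assume "A \<in> carrier (RAAG V Adj)"
  then obtain w where w: "w \<in> lists (letters V)" "A = cls V Adj w" by (rule carrier_obtain)
  have rw: "subst \<rho> w \<in> lists (letters V)" by (rule subst_W[OF valid_imgW[OF r] w(1)])
  have "compose (carrier (RAAG V Adj)) (ind_hom V Adj \<sigma>) (ind_hom V Adj \<rho>) A
      = ind_hom V Adj \<sigma> (ind_hom V Adj \<rho> (cls V Adj w))"
    using w cls_in_carrier[OF w(1)] by (simp add: compose_eq)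
  also have "\<dots> = cls V Adj (subst \<sigma> (subst \<rho> w))"
    by (simp add: ind_hom_cls[OF r w(1)] ind_hom_cls[OF s rw])
  also have "\<dots> = ind_hom V Adj (\<lambda>z. subst \<sigma> (\<rho> z)) A"
    using w by (simp add: ind_hom_cls[OF valid_comp[OF s r] w(1)] subst_subst)
  finally show "compose (carrier (RAAG V Adj)) (ind_hom V Adj \<sigma>) (ind_hom V Adj \<rho>) A = ind_hom V Adj (\<lambda>z. subst \<sigma> (\<rho> z)) A" .
qed

lemma ind_hom_eq: "valid V Adj \<sigma> \<Longrightarrow> valid V Adj \<sigma>' \<Longrightarrow> (\<forall>z\<in>V. (\<sigma> z, \<sigma>' z) \<in> raag_eq V Adj) \<Longrightarrow>
  ind_hom V Adj \<sigma> = ind_hom V Adj \<sigma>'"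
proof (rule extensionalityI[OF ind_hom_ext ind_hom_ext])
  assume s: "valid V Adj \<sigma>" and s': "valid V Adj \<sigma>'" and e: "\<forall>z\<in>V. (\<sigma> z, \<sigma>' z) \<in> raag_eq V Adj"
  fix A assume "A \<in> carrier (RAAG V Adj)"
  then obtain w where w: "w \<in> lists (letters V)" "A = cls V Adj w" by (rule carrier_obtain)
  have "(subst \<sigma> w, subst \<sigma>' w) \<in> raag_eq V Adj"
    by (rule subst_E_pointwise[OF valid_imgW[OF s] valid_imgW[OF s'] e w(1)])
  then show "ind_hom V Adj \<sigma> A = ind_hom V Adj \<sigma>' A"
    using w by (simp add: ind_hom_cls[OF s w(1)] ind_hom_cls[OF s' w(1)] cls_eq_iff)
qed

lemma ind_hom_maps: "valid V Adj \<sigma> \<Longrightarrow> A \<in> carrier (RAAG V Adj) \<Longrightarrow> ind_hom V Adj \<sigma> A \<in> carrier (RAAG V Adj)"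
proof -
  assume s: "valid V Adj \<sigma>" "A \<in> carrier (RAAG V Adj)"
  then obtain w where w: "w \<in> lists (letters V)" "A = cls V Adj w" by (metis carrier_obtain)
  show ?thesis using w by (simp add: ind_hom_cls[OF s(1) w(1)] cls_in_carrier subst_W[OF valid_imgW[OF s(1)] w(1)])
qed

lemma ind_hom_hom: "valid V Adj \<sigma> \<Longrightarrow> ind_hom V Adj \<sigma> \<in> hom (RAAG V Adj) (RAAG V Adj)"
proof (rule homI)
  assume s: "valid V Adj \<sigma>"
  fix A assume "A \<in> carrier (RAAG V Adj)"
  then show "ind_hom V Adj \<sigma> A \<in> carrier (RAAG V Adj)" by (rule ind_hom_maps[OF s])
next
  assume s: "valid V Adj \<sigma>"
  fix A B assume "A \<in> carrier (RAAG V Adj)" "B \<in> carrier (RAAG V Adj)"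
  then obtain u v where u: "u \<in> lists (letters V)" "A = cls V Adj u" and v: "v \<in> lists (letters V)" "B = cls V Adj v"
    by (metis carrier_obtain)
  have su: "subst \<sigma> u \<in> lists (letters V)" by (rule subst_W[OF valid_imgW[OF s] u(1)])
  have sv: "subst \<sigma> v \<in> lists (letters V)" by (rule subst_W[OF valid_imgW[OF s] v(1)])
  have uv: "u @ v \<in> lists (letters V)" using u v by simp
  show "ind_hom V Adj \<sigma> (A \<otimes>\<^bsub>RAAG V Adj\<^esub> B) = ind_hom V Adj \<sigma> A \<otimes>\<^bsub>RAAG V Adj\<^esub> ind_hom V Adj \<sigma> B"
    using u v by (simp add: mult_cls ind_hom_cls[OF s] su sv uv)
qed

definition inv_pair :: "'a set \<Rightarrow> ('a \<Rightarrow> 'a \<Rightarrow> bool) \<Rightarrow> ('a \<Rightarrow> 'a word) \<Rightarrow> ('a \<Rightarrow> 'a word) \<Rightarrow> bool" where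
  "inv_pair V Adj \<sigma> \<rho> \<longleftrightarrow> valid V Adj \<sigma> \<and> valid V Adj \<rho> \<and>
     (\<forall>z\<in>V. (subst \<sigma> (\<rho> z), [(z, True)]) \<in> raag_eq V Adj) \<and>
     (\<forall>z\<in>V. (subst \<rho> (\<sigma> z), [(z, True)]) \<in> raag_eq V Adj)"

lemma inv_pair_comp1: "inv_pair V Adj \<sigma> \<rho> \<Longrightarrow>
  compose (carrier (RAAG V Adj)) (ind_hom V Adj \<sigma>) (ind_hom V Adj \<rho>) = (\<lambda>A \<in> carrier (RAAG V Adj). A)"
  unfolding inv_pair_def
  by (simp add: ind_hom_compose ind_hom_id[symmetric] ind_hom_eq valid_comp valid_id)

lemma inv_pair_sym: "inv_pair V Adj \<sigma> \<rho> \<Longrightarrow> inv_pair V Adj \<rho> \<sigma>"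
  by (auto simp: inv_pair_def)

lemma inv_pair_auto: "inv_pair V Adj \<sigma> \<rho> \<Longrightarrow> ind_hom V Adj \<sigma> \<in> auto (RAAG V Adj)"
proof -
  assume p: "inv_pair V Adj \<sigma> \<rho>"
  let ?C = "carrier (RAAG V Adj)"
  have v: "valid V Adj \<sigma>" "valid V Adj \<rho>" using p by (auto simp: inv_pair_def)
  have c1: "\<And>A. A \<in> ?C \<Longrightarrow> ind_hom V Adj \<sigma> (ind_hom V Adj \<rho> A) = A"
    using inv_pair_comp1[OF p] by (metis compose_eq restrict_apply')
  have c2: "\<And>A. A \<in> ?C \<Longrightarrow> ind_hom V Adj \<rho> (ind_hom V Adj \<sigma> A) = A"
    using inv_pair_comp1[OF inv_pair_sym[OF p]] by (metis compose_eq restrict_apply')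
  have "bij_betw (ind_hom V Adj \<sigma>) ?C ?C"
    by (rule bij_betw_byWitness[where f'="ind_hom V Adj \<rho>"]) (use c1 c2 ind_hom_maps v in auto)
  then show ?thesis unfolding auto_def Bij_def using ind_hom_hom[OF v(1)] ind_hom_ext by auto
qed

lemma AG_mult: "f \<in> auto (RAAG V Adj) \<Longrightarrow> g \<in> auto (RAAG V Adj) \<Longrightarrow>
  f \<otimes>\<^bsub>AutoGroup (RAAG V Adj)\<^esub> g = compose (carrier (RAAG V Adj)) f g"
  by (simp add: AutoGroup_def BijGroup_def auto_def)

lemma AG_carrier: "carrier (AutoGroup (RAAG V Adj)) = auto (RAAG V Adj)"
  by (simp add: AutoGroup_def)

lemma AG_one: "\<one>\<^bsub>AutoGroup (RAAG V Adj)\<^esub> = (\<lambda>A \<in> carrier (RAAG V Adj). A)"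
  by (simp add: AutoGroup_def BijGroup_def)

lemma group_AG: "group (AutoGroup (RAAG V Adj))"
  by (rule group.AutoGroup[OF group_RAAG])

lemma inv_pair_inv: "inv_pair V Adj \<sigma> \<rho> \<Longrightarrow>
   inv\<^bsub>AutoGroup (RAAG V Adj)\<^esub> (ind_hom V Adj \<sigma>) = ind_hom V Adj \<rho>"
proof -
  assume p: "inv_pair V Adj \<sigma> \<rho>"
  have a1: "ind_hom V Adj \<sigma> \<in> auto (RAAG V Adj)" by (rule inv_pair_auto[OF p])
  have a2: "ind_hom V Adj \<rho> \<in> auto (RAAG V Adj)" by (rule inv_pair_auto[OF inv_pair_sym[OF p]])
  have m: "ind_hom V Adj \<rho> \<otimes>\<^bsub>AutoGroup (RAAG V Adj)\<^esub> ind_hom V Adj \<sigma> = \<one>\<^bsub>AutoGroup (RAAG V Adj)\<^esub>"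
    by (simp add: AG_mult[OF a2 a1] AG_one inv_pair_comp1[OF inv_pair_sym[OF p]])
  show ?thesis
    by (rule group.inv_equality[OF group_AG m]) (simp_all add: AG_carrier a1 a2)
qed

lemma AG_mult_ind: "valid V Adj \<sigma> \<Longrightarrow> valid V Adj \<rho> \<Longrightarrow> ind_hom V Adj \<sigma> \<in> auto (RAAG V Adj) \<Longrightarrow>
  ind_hom V Adj \<rho> \<in> auto (RAAG V Adj) \<Longrightarrow>
  ind_hom V Adj \<sigma> \<otimes>\<^bsub>AutoGroup (RAAG V Adj)\<^esub> ind_hom V Adj \<rho> = ind_hom V Adj (\<lambda>z. subst \<sigma> (\<rho> z))"
  by (simp add: AG_mult ind_hom_compose)

lemma auto_mult_closed: "f \<in> auto (RAAG V Adj) \<Longrightarrow> g \<in> auto (RAAG V Adj) \<Longrightarrow>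
  f \<otimes>\<^bsub>AutoGroup (RAAG V Adj)\<^esub> g \<in> auto (RAAG V Adj)"
  using group.subgroup_self[OF group_AG] by (metis AG_carrier group_AG monoid.m_closed group.is_monoid)




declare in_listsD [rule del] in_listspD [rule del] in_listsI [rule del] in_listspI [rule del]

lemma comm_ok_fst: "comm_ok Adj u w \<longleftrightarrow> (\<forall>p\<in>fst ` set u. \<forall>q\<in>fst ` set w. p = q \<or> Adj p q)"
  unfolding comm_ok_def by blast

lemma fst_set_subst1: "fst ` set (subst \<sigma> [l]) = fst ` set (\<sigma> (fst l))"
proof -
  have "fst ` linv ` A = fst ` A" for A :: "('a \<times> bool) set" by (auto simp: image_image)
  then show ?thesis by (simp add: winv_def image_image)
qed

lemma subst_single_W: "imgW V \<sigma> \<Longrightarrow> fst l \<in> V \<Longrightarrow> subst \<sigma> [l] \<in> lists (letters V)"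
  by (rule subst_W) (simp_all)

lemma subst_pair_cancel: "subst \<sigma> [l, linv l] = subst \<sigma> [l] @ winv (subst \<sigma> [l])"
proof -
  have "subst \<sigma> [linv l] = subst \<sigma> (winv [l])" by simp
  then have "subst \<sigma> [linv l] = winv (subst \<sigma> [l])" by (simp only: subst_winv)
  moreover have "subst \<sigma> [l, linv l] = subst \<sigma> [l] @ subst \<sigma> [linv l]"
    using subst_append[of \<sigma> "[l]" "[linv l]"] by simp
  ultimately show ?thesis by simp
qed

context
  fixes V :: "'a set" and Adj :: "'a \<Rightarrow> 'a \<Rightarrow> bool"
  assumes sg: "simple_graph V Adj"
begin

lemma Adj_V: "Adj u v \<Longrightarrow> u \<in> V \<and> v \<in> V" using sg by (simp add: simple_graph_def)
lemma Adj_sym: "Adj u v \<Longrightarrow> Adj v u" using sg by (simp add: simple_graph_def)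
lemma Adj_irr: "Adj u v \<Longrightarrow> u \<noteq> v" using sg by (simp add: simple_graph_def)

lemma dom_step: "dominates V Adj a b \<Longrightarrow> Adj b z \<Longrightarrow> z = a \<or> Adj a z"
  using Adj_V[of b z] by (auto simp: dominates_def lk_def st_def)

lemma dom_trans: "dominates V Adj u v \<Longrightarrow> dominates V Adj v w \<Longrightarrow> u \<noteq> w \<Longrightarrow> dominates V Adj u w"
proof -
  assume uv: "dominates V Adj u v" and vw: "dominates V Adj v w" and ne: "u \<noteq> w"
  have uv': "\<And>z. Adj v z \<Longrightarrow> z = u \<or> Adj u z" using dom_step[OF uv] .
  have vw': "\<And>z. Adj w z \<Longrightarrow> z = v \<or> Adj v z" using dom_step[OF vw] .
  have "\<And>z. Adj w z \<Longrightarrow> z = u \<or> Adj u z"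
  proof -
    fix z assume wz: "Adj w z"
    show "z = u \<or> Adj u z"
    proof (cases "z = v")
      case False then show ?thesis using vw'[OF wz] uv' by blast
    next
      case True
      then have "Adj v w" using wz Adj_sym by simp
      then have "Adj u w" using uv' ne by blast
      then have "Adj w u" by (rule Adj_sym)
      then have "u = v \<or> Adj v u" using vw' by blast
      then show ?thesis using True Adj_sym by blast
    qed
  qed
  then show ?thesis unfolding dominates_def lk_def st_def using Adj_V by auto
qed

lemma step_subst:
  assumes iS: "imgW V \<sigma>" and cm: "\<forall>z1 z2. Adj z1 z2 \<longrightarrow> comm_ok Adj (\<sigma> z1) (\<sigma> z2)"
    and st: "(p, q) \<in> raag_step V Adj"
  shows "(subst \<sigma> p, subst \<sigma> q) \<in> raag_eq V Adj"
  using st unfolding raag_step_def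
proof (elim UnE CollectE exE conjE)
  fix u v l assume e0: "(p, q) = (u @ [l, linv l] @ v, u @ v)" and e: "set u \<subseteq> letters V" "set v \<subseteq> letters V" "l \<in> letters V"
  have uW: "u \<in> lists (letters V)" "v \<in> lists (letters V)" using e by (auto simp: in_lists_conv_set)
  have sl: "subst \<sigma> [l] \<in> lists (letters V)" by (rule subst_single_W[OF iS]) (use e(3) in simp)
  have c: "(subst \<sigma> [l] @ winv (subst \<sigma> [l]), []) \<in> raag_eq V Adj" by (rule winv_cancel[OF sl])
  have "(subst \<sigma> u @ (subst \<sigma> [l] @ winv (subst \<sigma> [l])) @ subst \<sigma> v, subst \<sigma> u @ [] @ subst \<sigma> v) \<in> raag_eq V Adj"
    by (rule E_ctx[OF c]) (simp_all add: subst_W[OF iS] uW)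
  then show "(subst \<sigma> p, subst \<sigma> q) \<in> raag_eq V Adj"
    using e0 subst_pair_cancel[of \<sigma> l] by simp
next
  fix u v l1 l2 assume e0: "(p, q) = (u @ [l1, l2] @ v, u @ [l2, l1] @ v)" and e: "set u \<subseteq> letters V" "set v \<subseteq> letters V"
    "l1 \<in> letters V" "l2 \<in> letters V" "Adj (bar l1) (bar l2)"
  have uW: "u \<in> lists (letters V)" "v \<in> lists (letters V)" using e by (auto simp: in_lists_conv_set)
  have s1: "subst \<sigma> [l1] \<in> lists (letters V)" by (rule subst_single_W[OF iS]) (use e(3) in simp)
  have s2: "subst \<sigma> [l2] \<in> lists (letters V)" by (rule subst_single_W[OF iS]) (use e(4) in simp)
  have "comm_ok Adj (\<sigma> (fst l1)) (\<sigma> (fst l2))" using cm e(5) by (simp add: bar_def)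
  then have "comm_ok Adj (subst \<sigma> [l1]) (subst \<sigma> [l2])"
    unfolding comm_ok_fst fst_set_subst1 .
  then have c: "(subst \<sigma> [l1] @ subst \<sigma> [l2], subst \<sigma> [l2] @ subst \<sigma> [l1]) \<in> raag_eq V Adj"
    by (rule E_comm_ok[OF s1 s2])
  have "(subst \<sigma> u @ (subst \<sigma> [l1] @ subst \<sigma> [l2]) @ subst \<sigma> v, subst \<sigma> u @ (subst \<sigma> [l2] @ subst \<sigma> [l1]) @ subst \<sigma> v) \<in> raag_eq V Adj"
    by (rule E_ctx[OF c]) (simp_all add: subst_W[OF iS] uW)
  moreover have "subst \<sigma> [l1, l2] = subst \<sigma> [l1] @ subst \<sigma> [l2]" "subst \<sigma> [l2, l1] = subst \<sigma> [l2] @ subst \<sigma> [l1]"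
    using subst_append[of \<sigma> "[l1]" "[l2]"] subst_append[of \<sigma> "[l2]" "[l1]"] by simp_all
  ultimately show "(subst \<sigma> p, subst \<sigma> q) \<in> raag_eq V Adj"
    using e0 by simp
qed

lemma valid_comm:
  assumes iS: "imgW V \<sigma>" and cm: "\<forall>z1 z2. Adj z1 z2 \<longrightarrow> comm_ok Adj (\<sigma> z1) (\<sigma> z2)"
  shows "valid V Adj \<sigma>"
proof -
  have "\<And>w w'. (w, w') \<in> raag_eq V Adj \<Longrightarrow> w \<in> lists (letters V) \<Longrightarrow> (subst \<sigma> w, subst \<sigma> w') \<in> raag_eq V Adj"
  proof -
    fix w w' assume e: "(w, w') \<in> raag_eq V Adj" and w: "w \<in> lists (letters V)"
    from e show "(subst \<sigma> w, subst \<sigma> w') \<in> raag_eq V Adj" unfolding raag_eq_def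
    proof (induction rule: rtrancl_induct)
      case base then show ?case by simp
    next
      case (step y z)
      have "(subst \<sigma> y, subst \<sigma> z) \<in> raag_eq V Adj"
      proof (cases "(y, z) \<in> raag_step V Adj")
        case True then show ?thesis by (rule step_subst[OF iS cm])
      next
        case False
        then have "(z, y) \<in> raag_step V Adj" using step.hyps(2) by blast
        then show ?thesis by (rule E_sym[OF step_subst[OF iS cm]])
      qed
      then show ?case using step.IH unfolding raag_eq_def by (rule rtrancl_trans[rotated])
    qed
  qed
  then show ?thesis using iS by (auto simp: valid_def)
qed

lemma letter_map_pos: "letter_map (v, True) img z = (if z = v then img else [(z, True)])"
  by (simp add: letter_map_def bar_def)

lemma valid_lm:
  assumes v: "v \<in> V" and img: "img \<in> lists (letters V)"
    and c: "\<forall>z m. Adj v z \<longrightarrow> m \<in> set img \<longrightarrow> fst m = z \<or> Adj (fst m) z"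
  shows "valid V Adj (letter_map (v, True) img)"
proof (rule valid_comm)
  show "imgW V (letter_map (v, True) img)"
    unfolding imgW_def letter_map_pos using img by simp
  show "\<forall>z1 z2. Adj z1 z2 \<longrightarrow> comm_ok Adj (letter_map (v, True) img z1) (letter_map (v, True) img z2)"
  proof (intro allI impI)
    fix z1 z2 assume a: "Adj z1 z2"
    have ne: "z1 \<noteq> z2" using Adj_irr[OF a] .
    show "comm_ok Adj (letter_map (v, True) img z1) (letter_map (v, True) img z2)"
    proof (cases "z1 = v")
      case True
      have h: "\<forall>m\<in>set img. fst m = z2 \<or> Adj (fst m) z2" using c a True by blast
      have "z2 \<noteq> v" using ne True by simp
      then show ?thesis using h True unfolding letter_map_pos comm_ok_def by simp
    next
      case False
      show ?thesis
      proof (cases "z2 = v")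
        case True
        then have "Adj v z1" using a Adj_sym by simp
        then have h: "\<forall>m\<in>set img. fst m = z1 \<or> Adj (fst m) z1" using c by blast
        have h2: "\<forall>m\<in>set img. z1 = fst m \<or> Adj z1 (fst m)" using h Adj_sym by metis
        show ?thesis using h2 False True unfolding letter_map_pos comm_ok_def by simp
      next
        case F2: False
        then show ?thesis using False a unfolding letter_map_pos comm_ok_def by simp
      qed
    qed
  qed
qed

lemma valid_transv: "a \<in> V \<Longrightarrow> b \<in> V \<Longrightarrow> dominates V Adj a b \<Longrightarrow>
  valid V Adj (letter_map (b, True) [(b, True), (a, s)])"
  by (rule valid_lm) (auto dest: dom_step)

lemma valid_pconj: "p \<in> V \<Longrightarrow> v \<in> V \<Longrightarrow> dominates V Adj p v \<Longrightarrow>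
  valid V Adj (letter_map (v, True) [linv (p, s), (v, True), (p, s)])"
  by (rule valid_lm) (auto dest: dom_step simp: linv_def)

lemma valid_ctransv: "fst p \<in> V \<Longrightarrow> fst q \<in> V \<Longrightarrow> c \<in> V \<Longrightarrow> dominates V Adj (fst p) c \<Longrightarrow>
  dominates V Adj (fst q) c \<Longrightarrow>
  valid V Adj (letter_map (c, True) [(c, True), p, q, linv p, linv q])"
  by (rule valid_lm) (auto dest: dom_step)

end



declare in_listsD [rule del] in_listspD [rule del] in_listsI [rule del] in_listspI [rule del]

definition cmp :: "('a \<Rightarrow> 'a word) \<Rightarrow> ('a \<Rightarrow> 'a word) \<Rightarrow> 'a \<Rightarrow> 'a word" where
  "cmp \<sigma> \<rho> = (\<lambda>z. subst \<sigma> (\<rho> z))"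

definition tv :: "'a \<Rightarrow> 'a \<Rightarrow> bool \<Rightarrow> 'a \<Rightarrow> 'a word" where
  "tv b a s = letter_map (b, True) [(b, True), (a, s)]"
definition pc :: "'a \<Rightarrow> bool \<Rightarrow> 'a \<Rightarrow> 'a \<Rightarrow> 'a word" where
  "pc p s v = letter_map (v, True) [linv (p, s), (v, True), (p, s)]"
definition ct :: "'a letter \<Rightarrow> 'a letter \<Rightarrow> 'a \<Rightarrow> 'a \<Rightarrow> 'a word" where
  "ct p q c = letter_map (c, True) [(c, True), p, q, linv p, linv q]"

lemma tv_simp: "tv b a s z = (if z = b then [(b, True), (a, s)] else [(z, True)])"
  by (simp add: tv_def letter_map_def bar_def)
lemma pc_simp: "pc p s v z = (if z = v then [(p, \<not> s), (v, True), (p, s)] else [(z, True)])"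
  by (simp add: pc_def letter_map_def bar_def linv_def)
lemma ct_simp: "ct (p, s) (q, t) c z = (if z = c then [(c, True), (p, s), (q, t), (p, \<not> s), (q, \<not> t)] else [(z, True)])"
  by (simp add: ct_def letter_map_def bar_def linv_def)

lemma E_by_fred_pt: "valid V Adj \<sigma> \<Longrightarrow> valid V Adj \<rho> \<Longrightarrow> z \<in> V \<Longrightarrow> fred (\<sigma> z) = fred (\<rho> z)
  \<Longrightarrow> (\<sigma> z, \<rho> z) \<in> raag_eq V Adj"
  by (rule E_by_fred) (auto simp: valid_def imgW_def)

lemma valid_single: "valid V Adj \<sigma> \<Longrightarrow> z \<in> V \<Longrightarrow> [(z, True)] \<in> lists (letters V)"
  by (simp add: in_lists_conv_set)

definition Good :: "'a set \<Rightarrow> ('a \<Rightarrow> 'a \<Rightarrow> bool) \<Rightarrow> 'a set \<Rightarrow> ('a \<Rightarrow> 'a word) \<Rightarrow> bool" where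
  "Good V Adj Z \<sigma> \<longleftrightarrow> valid V Adj \<sigma> \<and> ind_hom V Adj \<sigma> \<in> auto (RAAG V Adj) \<and> ind_hom V Adj \<sigma> \<in> K V Adj Z"

lemma Good_gen: "inv_pair V Adj \<sigma> \<rho> \<Longrightarrow> ind_hom V Adj \<sigma> \<in> K_gens V Adj Z \<Longrightarrow> Good V Adj Z \<sigma>"
  unfolding Good_def K_def
  by (auto simp: inv_pair_def inv_pair_auto intro: generate.incl)

lemma Good_comp: "Good V Adj Z \<sigma> \<Longrightarrow> Good V Adj Z \<rho> \<Longrightarrow> Good V Adj Z (cmp \<sigma> \<rho>)"
proof -
  assume s: "Good V Adj Z \<sigma>" and r: "Good V Adj Z \<rho>"
  have vs: "valid V Adj \<sigma>" "ind_hom V Adj \<sigma> \<in> auto (RAAG V Adj)" "ind_hom V Adj \<sigma> \<in> K V Adj Z"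
    using s by (auto simp: Good_def)
  have vr: "valid V Adj \<rho>" "ind_hom V Adj \<rho> \<in> auto (RAAG V Adj)" "ind_hom V Adj \<rho> \<in> K V Adj Z"
    using r by (auto simp: Good_def)
  have eq: "ind_hom V Adj \<sigma> \<otimes>\<^bsub>AutoGroup (RAAG V Adj)\<^esub> ind_hom V Adj \<rho> = ind_hom V Adj (cmp \<sigma> \<rho>)"
    unfolding cmp_def by (rule AG_mult_ind[OF vs(1) vr(1) vs(2) vr(2)])
  have "valid V Adj (cmp \<sigma> \<rho>)" unfolding cmp_def by (rule valid_comp[OF vs(1) vr(1)])
  moreover have "ind_hom V Adj (cmp \<sigma> \<rho>) \<in> auto (RAAG V Adj)"
    using auto_mult_closed[OF vs(2) vr(2)] eq by simp
  moreover have "ind_hom V Adj (cmp \<sigma> \<rho>) \<in> K V Adj Z"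
    using generate.eng[OF vs(3)[unfolded K_def] vr(3)[unfolded K_def]] eq by (simp add: K_def)
  ultimately show ?thesis by (simp add: Good_def)
qed

lemma Good_eq: "Good V Adj Z \<sigma> \<Longrightarrow> valid V Adj \<sigma>' \<Longrightarrow> (\<forall>z\<in>V. (\<sigma> z, \<sigma>' z) \<in> raag_eq V Adj) \<Longrightarrow> Good V Adj Z \<sigma>'"
proof -
  assume g: "Good V Adj Z \<sigma>" and v: "valid V Adj \<sigma>'" and e: "\<forall>z\<in>V. (\<sigma> z, \<sigma>' z) \<in> raag_eq V Adj"
  have "ind_hom V Adj \<sigma> = ind_hom V Adj \<sigma>'" using g v e by (intro ind_hom_eq) (auto simp: Good_def)
  then show ?thesis using g v by (simp add: Good_def)
qed

context
  fixes V :: "'a set" and Adj :: "'a \<Rightarrow> 'a \<Rightarrow> bool"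
  assumes sg: "simple_graph V Adj"
begin

lemma valid_tv: "a \<in> V \<Longrightarrow> b \<in> V \<Longrightarrow> dominates V Adj a b \<Longrightarrow> valid V Adj (tv b a s)"
  unfolding tv_def by (rule valid_transv[OF sg])

lemma valid_pc: "p \<in> V \<Longrightarrow> v \<in> V \<Longrightarrow> dominates V Adj p v \<Longrightarrow> valid V Adj (pc p s v)"
  unfolding pc_def by (rule valid_pconj[OF sg])

lemma valid_ct: "p \<in> V \<Longrightarrow> q \<in> V \<Longrightarrow> c \<in> V \<Longrightarrow> dominates V Adj p c \<Longrightarrow> dominates V Adj q c \<Longrightarrow>
  valid V Adj (ct (p, s) (q, t) c)"
  unfolding ct_def by (rule valid_ctransv[OF sg]) simp_all

lemma inv_tv: "a \<in> V \<Longrightarrow> b \<in> V \<Longrightarrow> dominates V Adj a b \<Longrightarrow> a \<noteq> b \<Longrightarrow> inv_pair V Adj (tv b a s) (tv b a (\<not> s))"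
proof -
  assume h: "a \<in> V" "b \<in> V" "dominates V Adj a b" "a \<noteq> b"
  have v1: "valid V Adj (tv b a s)" "valid V Adj (tv b a (\<not> s))" using h by (simp_all add: valid_tv)
  have "\<forall>z\<in>V. (cmp (tv b a s) (tv b a (\<not> s)) z, [(z, True)]) \<in> raag_eq V Adj"
  proof
    fix z assume z: "z \<in> V"
    have "fred (cmp (tv b a s) (tv b a (\<not> s)) z) = fred [(z, True)]"
      using h(4) by (cases s) (auto simp: cmp_def tv_simp linv_def)
    then show "(cmp (tv b a s) (tv b a (\<not> s)) z, [(z, True)]) \<in> raag_eq V Adj"
      using E_by_fred_pt[OF valid_comp[OF v1] valid_id z] by (simp add: cmp_def)
  qed
  moreover have "\<forall>z\<in>V. (cmp (tv b a (\<not> s)) (tv b a s) z, [(z, True)]) \<in> raag_eq V Adj"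
  proof
    fix z assume z: "z \<in> V"
    have "fred (cmp (tv b a (\<not> s)) (tv b a s) z) = fred [(z, True)]"
      using h(4) by (cases s) (auto simp: cmp_def tv_simp linv_def)
    then show "(cmp (tv b a (\<not> s)) (tv b a s) z, [(z, True)]) \<in> raag_eq V Adj"
      using E_by_fred_pt[OF valid_comp[OF v1(2) v1(1)] valid_id z] by (simp add: cmp_def)
  qed
  ultimately show ?thesis using v1 by (simp add: inv_pair_def cmp_def)
qed

end



declare in_listsD [rule del] in_listspD [rule del] in_listsI [rule del] in_listspI [rule del]

context
  fixes V :: "'a set" and Adj :: "'a \<Rightarrow> 'a \<Rightarrow> bool"
  assumes sg: "simple_graph V Adj"
begin

lemma inv_pc: "p \<in> V \<Longrightarrow> v \<in> V \<Longrightarrow> dominates V Adj p v \<Longrightarrow> p \<noteq> v \<Longrightarrow> inv_pair V Adj (pc p s v) (pc p (\<not> s) v)"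
proof -
  assume h: "p \<in> V" "v \<in> V" "dominates V Adj p v" "p \<noteq> v"
  have v1: "valid V Adj (pc p s v)" "valid V Adj (pc p (\<not> s) v)" using h by (simp_all add: valid_pc[OF sg])
  have "\<forall>z\<in>V. (cmp (pc p s v) (pc p (\<not> s) v) z, [(z, True)]) \<in> raag_eq V Adj"
  proof
    fix z assume z: "z \<in> V"
    have "fred (cmp (pc p s v) (pc p (\<not> s) v) z) = fred [(z, True)]"
      using h(4) by (cases s) (auto simp: cmp_def pc_simp linv_def)
    then show "(cmp (pc p s v) (pc p (\<not> s) v) z, [(z, True)]) \<in> raag_eq V Adj"
      using E_by_fred_pt[OF valid_comp[OF v1] valid_id z] by (simp add: cmp_def)
  qed
  moreover have "\<forall>z\<in>V. (cmp (pc p (\<not> s) v) (pc p s v) z, [(z, True)]) \<in> raag_eq V Adj"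
  proof
    fix z assume z: "z \<in> V"
    have "fred (cmp (pc p (\<not> s) v) (pc p s v) z) = fred [(z, True)]"
      using h(4) by (cases s) (auto simp: cmp_def pc_simp linv_def)
    then show "(cmp (pc p (\<not> s) v) (pc p s v) z, [(z, True)]) \<in> raag_eq V Adj"
      using E_by_fred_pt[OF valid_comp[OF v1(2) v1(1)] valid_id z] by (simp add: cmp_def)
  qed
  ultimately show ?thesis using v1 by (simp add: inv_pair_def cmp_def)
qed

lemma inv_ct: "p \<in> V \<Longrightarrow> q \<in> V \<Longrightarrow> c \<in> V \<Longrightarrow> dominates V Adj p c \<Longrightarrow> dominates V Adj q c \<Longrightarrow>
  p \<noteq> c \<Longrightarrow> q \<noteq> c \<Longrightarrow> p \<noteq> q \<Longrightarrow> inv_pair V Adj (ct (p, s) (q, t) c) (ct (q, t) (p, s) c)"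
proof -
  assume h: "p \<in> V" "q \<in> V" "c \<in> V" "dominates V Adj p c" "dominates V Adj q c" "p \<noteq> c" "q \<noteq> c" "p \<noteq> q"
  have v1: "valid V Adj (ct (p, s) (q, t) c)" "valid V Adj (ct (q, t) (p, s) c)"
    using h by (simp_all add: valid_ct[OF sg])
  have "\<forall>z\<in>V. (cmp (ct (p, s) (q, t) c) (ct (q, t) (p, s) c) z, [(z, True)]) \<in> raag_eq V Adj"
  proof
    fix z assume z: "z \<in> V"
    have "fred (cmp (ct (p, s) (q, t) c) (ct (q, t) (p, s) c) z) = fred [(z, True)]"
      using h(6-8) by (cases s; cases t) (auto simp: cmp_def ct_simp linv_def)
    then show "(cmp (ct (p, s) (q, t) c) (ct (q, t) (p, s) c) z, [(z, True)]) \<in> raag_eq V Adj"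
      using E_by_fred_pt[OF valid_comp[OF v1] valid_id z] by (simp add: cmp_def)
  qed
  moreover have "\<forall>z\<in>V. (cmp (ct (q, t) (p, s) c) (ct (p, s) (q, t) c) z, [(z, True)]) \<in> raag_eq V Adj"
  proof
    fix z assume z: "z \<in> V"
    have "fred (cmp (ct (q, t) (p, s) c) (ct (p, s) (q, t) c) z) = fred [(z, True)]"
      using h(6-8) by (cases s; cases t) (auto simp: cmp_def ct_simp linv_def)
    then show "(cmp (ct (q, t) (p, s) c) (ct (p, s) (q, t) c) z, [(z, True)]) \<in> raag_eq V Adj"
      using E_by_fred_pt[OF valid_comp[OF v1(2) v1(1)] valid_id z] by (simp add: cmp_def)
  qed
  ultimately show ?thesis using v1 by (simp add: inv_pair_def cmp_def)
qed

lemma Good_pc: "p \<in> V \<Longrightarrow> v \<in> V \<Longrightarrow> dominates V Adj p v \<Longrightarrow> p \<noteq> v \<Longrightarrow> p \<in> Z \<Longrightarrow> v \<in> Z \<Longrightarrow>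
  Good V Adj Z (pc p s v)"
proof -
  assume h: "p \<in> V" "v \<in> V" "dominates V Adj p v" "p \<noteq> v" "p \<in> Z" "v \<in> Z"
  have "pconj V Adj (p, s) (v, True) \<in> {pconj V Adj x c | x c. x \<in> letters V \<and> c \<in> letters V
        \<and> bar x \<in> Z \<and> bar c \<in> Z \<and> ldom V Adj x c \<and> bar x \<noteq> bar c}"
    apply (rule CollectI)
    apply (rule exI[where x="(p, s)"], rule exI[where x="(v, True)"])
    using h by (simp add: bar_def ldom_def)
  then have "ind_hom V Adj (pc p s v) \<in> K_gens V Adj Z"
    unfolding K_gens_def pconj_def pc_def by blast
  then show ?thesis by (rule Good_gen[OF inv_pc[OF h(1-4)]])
qed

lemma Good_ct: "p \<in> V \<Longrightarrow> q \<in> V \<Longrightarrow> c \<in> V \<Longrightarrow> dominates V Adj p c \<Longrightarrow> dominates V Adj q c \<Longrightarrow>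
  p \<noteq> c \<Longrightarrow> q \<noteq> c \<Longrightarrow> p \<noteq> q \<Longrightarrow> p \<in> Z \<Longrightarrow> q \<in> Z \<Longrightarrow> c \<in> Z \<Longrightarrow> Good V Adj Z (ct (p, s) (q, t) c)"
proof -
  assume h: "p \<in> V" "q \<in> V" "c \<in> V" "dominates V Adj p c" "dominates V Adj q c"
    "p \<noteq> c" "q \<noteq> c" "p \<noteq> q" "p \<in> Z" "q \<in> Z" "c \<in> Z"
  have "ctransv V Adj (p, s) (q, t) (c, True) \<in> {ctransv V Adj x y c | x y c. x \<in> letters V \<and> y \<in> letters V \<and> c \<in> letters V
        \<and> bar x \<in> Z \<and> bar y \<in> Z \<and> bar c \<in> Z
        \<and> ldom V Adj x c \<and> ldom V Adj y c
        \<and> bar x \<noteq> bar y \<and> bar x \<noteq> bar c \<and> bar y \<noteq> bar c}"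
    apply (rule CollectI)
    apply (rule exI[where x="(p, s)"], rule exI[where x="(q, t)"], rule exI[where x="(c, True)"])
    using h by (simp add: bar_def ldom_def)
  then have "ind_hom V Adj (ct (p, s) (q, t) c) \<in> K_gens V Adj Z"
    unfolding K_gens_def ctransv_def ct_def by blast
  then show ?thesis by (rule Good_gen[OF inv_ct[OF h(1-8)]])
qed

lemma LHS_eq:
  assumes "a \<in> V" "b \<in> V" "c \<in> V" "x \<in> V" "y \<in> V" "dominates V Adj a b" "a \<noteq> b"
    "dominates V Adj x c" "x \<noteq> c" "dominates V Adj y c" "y \<noteq> c" "x \<noteq> y"
  shows "transv V Adj (a, True) (b, True)
           \<otimes>\<^bsub>AutoGroup (RAAG V Adj)\<^esub> ctransv V Adj (x, True) (y, True) (c, True)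
           \<otimes>\<^bsub>AutoGroup (RAAG V Adj)\<^esub> inv\<^bsub>AutoGroup (RAAG V Adj)\<^esub> transv V Adj (a, True) (b, True)
         = ind_hom V Adj (cmp (cmp (tv b a True) (ct (x, True) (y, True) c)) (tv b a False))"
    and "valid V Adj (cmp (cmp (tv b a True) (ct (x, True) (y, True) c)) (tv b a False))"
proof -
  have p1: "inv_pair V Adj (tv b a True) (tv b a False)" using inv_tv[OF sg, of a b True] assms by simp
  have p2: "inv_pair V Adj (ct (x, True) (y, True) c) (ct (y, True) (x, True) c)"
    using inv_ct[of x y c True True] assms by simp
  have t1: "transv V Adj (a, True) (b, True) = ind_hom V Adj (tv b a True)" by (simp add: transv_def tv_def)
  have t2: "ctransv V Adj (x, True) (y, True) (c, True) = ind_hom V Adj (ct (x, True) (y, True) c)"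
    by (simp add: ctransv_def ct_def)
  have v1: "valid V Adj (tv b a True)" "valid V Adj (tv b a False)" "valid V Adj (ct (x, True) (y, True) c)"
    using p1 p2 by (auto simp: inv_pair_def)
  have a1: "ind_hom V Adj (tv b a True) \<in> auto (RAAG V Adj)" by (rule inv_pair_auto[OF p1])
  have a2: "ind_hom V Adj (tv b a False) \<in> auto (RAAG V Adj)" by (rule inv_pair_auto[OF inv_pair_sym[OF p1]])
  have a3: "ind_hom V Adj (ct (x, True) (y, True) c) \<in> auto (RAAG V Adj)" by (rule inv_pair_auto[OF p2])
  have m1: "ind_hom V Adj (tv b a True) \<otimes>\<^bsub>AutoGroup (RAAG V Adj)\<^esub> ind_hom V Adj (ct (x, True) (y, True) c)
     = ind_hom V Adj (cmp (tv b a True) (ct (x, True) (y, True) c))"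
    unfolding cmp_def by (rule AG_mult_ind[OF v1(1) v1(3) a1 a3])
  have v2: "valid V Adj (cmp (tv b a True) (ct (x, True) (y, True) c))"
    unfolding cmp_def by (rule valid_comp[OF v1(1) v1(3)])
  have a4: "ind_hom V Adj (cmp (tv b a True) (ct (x, True) (y, True) c)) \<in> auto (RAAG V Adj)"
    using auto_mult_closed[OF a1 a3] m1 by simp
  have m2: "ind_hom V Adj (cmp (tv b a True) (ct (x, True) (y, True) c)) \<otimes>\<^bsub>AutoGroup (RAAG V Adj)\<^esub> ind_hom V Adj (tv b a False)
     = ind_hom V Adj (cmp (cmp (tv b a True) (ct (x, True) (y, True) c)) (tv b a False))"
    unfolding cmp_def[of "cmp _ _"] by (rule AG_mult_ind[OF v2 v1(2) a4 a2])
  show "transv V Adj (a, True) (b, True)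
           \<otimes>\<^bsub>AutoGroup (RAAG V Adj)\<^esub> ctransv V Adj (x, True) (y, True) (c, True)
           \<otimes>\<^bsub>AutoGroup (RAAG V Adj)\<^esub> inv\<^bsub>AutoGroup (RAAG V Adj)\<^esub> transv V Adj (a, True) (b, True)
         = ind_hom V Adj (cmp (cmp (tv b a True) (ct (x, True) (y, True) c)) (tv b a False))"
    unfolding t1 t2 inv_pair_inv[OF p1] m1 m2 ..
  show "valid V Adj (cmp (cmp (tv b a True) (ct (x, True) (y, True) c)) (tv b a False))"
    unfolding cmp_def[of "cmp _ _"] by (rule valid_comp[OF v2 v1(2)])
qed

end



declare in_listsD [rule del] in_listspD [rule del] in_listsI [rule del] in_listspI [rule del]

lemma finish: "Good V Adj Z \<sigma> \<Longrightarrow> valid V Adj \<sigma>' \<Longrightarrow> (\<And>z. z \<in> V \<Longrightarrow> fred (\<sigma> z) = fred (\<sigma>' z)) \<Longrightarrow> Good V Adj Z \<sigma>'"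
proof -
  assume g: "Good V Adj Z \<sigma>" and v: "valid V Adj \<sigma>'" and f: "\<And>z. z \<in> V \<Longrightarrow> fred (\<sigma> z) = fred (\<sigma>' z)"
  have vs: "valid V Adj \<sigma>" using g by (simp add: Good_def)
  show ?thesis by (rule Good_eq[OF g v]) (use E_by_fred_pt[OF vs v] f in blast)
qed

context
  fixes V :: "'a set" and Adj :: "'a \<Rightarrow> 'a \<Rightarrow> bool" and a b c x y :: 'a
  assumes sg: "simple_graph V Adj"
    and V: "a \<in> V" "b \<in> V" "c \<in> V" "x \<in> V" "y \<in> V"
    and d: "dominates V Adj a b" "a \<noteq> b" "dominates V Adj x c" "x \<noteq> c" "dominates V Adj y c" "y \<noteq> c" "x \<noteq> y"
begin

abbreviation "ZZ \<equiv> {a, b, c, x, y}"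
abbreviation "TT \<equiv> ct (x, True) (y, True) c"
abbreviation "LL \<equiv> cmp (cmp (tv b a True) TT) (tv b a False)"

lemma vL: "valid V Adj LL" using LHS_eq(2)[OF sg V d] .

lemma GT: "Good V Adj ZZ TT" by (rule Good_ct[OF sg]) (use V d in auto)

lemma caseB: "b \<noteq> c \<Longrightarrow> b \<noteq> x \<Longrightarrow> b \<noteq> y \<Longrightarrow> a \<noteq> c \<Longrightarrow> Good V Adj ZZ LL"
  by (rule finish[OF GT vL]) (use d in \<open>auto simp: cmp_def tv_simp ct_simp linv_def\<close>)

lemma caseA: "b = c \<Longrightarrow> Good V Adj ZZ LL"
proof -
  assume bc: "b = c"
  have dac: "dominates V Adj a c" using d bc by simp
  have g: "Good V Adj ZZ (cmp (pc a True c) (cmp TT (pc a False c)))"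
    by (intro Good_comp GT Good_pc[OF sg]) (use V d bc dac in auto)
  show ?thesis
    by (rule finish[OF g vL]) (use d bc in \<open>auto simp: cmp_def tv_simp ct_simp pc_simp linv_def\<close>)
qed

lemma caseC: "b \<noteq> c \<Longrightarrow> b \<noteq> x \<Longrightarrow> b \<noteq> y \<Longrightarrow> a = c \<Longrightarrow> Good V Adj ZZ LL"
proof -
  assume h: "b \<noteq> c" "b \<noteq> x" "b \<noteq> y" "a = c"
  have dcb: "dominates V Adj c b" using d h by simp
  have dxb: "dominates V Adj x b" by (rule dom_trans[OF sg d(3) dcb]) (use h in auto)
  have dyb: "dominates V Adj y b" by (rule dom_trans[OF sg d(5) dcb]) (use h in auto)
  have g: "Good V Adj ZZ (cmp TT (cmp (pc c True b) (cmp (ct (y, True) (x, True) b) (pc c False b))))"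
    by (intro Good_comp GT Good_pc[OF sg] Good_ct[OF sg]) (use V d h dcb dxb dyb in auto)
  show ?thesis
    by (rule finish[OF g vL]) (use d h in \<open>auto simp: cmp_def tv_simp ct_simp pc_simp linv_def\<close>)
qed

lemma caseD1: "b = x \<Longrightarrow> a = y \<Longrightarrow> Good V Adj ZZ LL"
  by (rule finish[OF GT vL]) (use d in \<open>auto simp: cmp_def tv_simp ct_simp linv_def\<close>)

lemma caseE1: "b = y \<Longrightarrow> a = x \<Longrightarrow> Good V Adj ZZ LL"
  by (rule finish[OF GT vL]) (use d in \<open>auto simp: cmp_def tv_simp ct_simp linv_def\<close>)

lemma caseD2: "b = x \<Longrightarrow> a \<noteq> y \<Longrightarrow> a \<noteq> c \<Longrightarrow> Good V Adj ZZ LL"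
proof -
  assume h: "b = x" "a \<noteq> y" "a \<noteq> c"
  have dax: "dominates V Adj a x" using d h by simp
  have dac: "dominates V Adj a c" by (rule dom_trans[OF sg dax d(3)]) (use h in auto)
  have g: "Good V Adj ZZ (cmp (pc x True c) (cmp (ct (a, True) (y, True) c) (cmp (pc x False c) TT)))"
    by (intro Good_comp GT Good_pc[OF sg] Good_ct[OF sg]) (use V d h dac in auto)
  show ?thesis
    by (rule finish[OF g vL]) (use d h in \<open>auto simp: cmp_def tv_simp ct_simp pc_simp linv_def\<close>)
qed

lemma caseE2: "b = y \<Longrightarrow> a \<noteq> x \<Longrightarrow> a \<noteq> c \<Longrightarrow> Good V Adj ZZ LL"
proof -
  assume h: "b = y" "a \<noteq> x" "a \<noteq> c"
  have day: "dominates V Adj a y" using d h by simp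
  have dac: "dominates V Adj a c" by (rule dom_trans[OF sg day d(5)]) (use h in auto)
  have g: "Good V Adj ZZ (cmp TT (cmp (pc y True c) (cmp (ct (x, True) (a, True) c) (pc y False c))))"
    by (intro Good_comp GT Good_pc[OF sg] Good_ct[OF sg]) (use V d h dac in auto)
  show ?thesis
    by (rule finish[OF g vL]) (use d h in \<open>auto simp: cmp_def tv_simp ct_simp pc_simp linv_def\<close>)
qed

lemma caseD3: "b = x \<Longrightarrow> a = c \<Longrightarrow> Good V Adj ZZ LL"
proof -
  assume h: "b = x" "a = c"
  have dcx: "dominates V Adj c x" using d h by simp
  have dyx: "dominates V Adj y x" by (rule dom_trans[OF sg d(5) dcx]) (use d in auto)
  have g: "Good V Adj ZZ (cmp (pc c True x) (cmp (pc x True c) (cmp (pc y True c) (cmp (ct (y, True) (c, True) x)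
      (cmp (ct (y, True) (x, False) c) (cmp (pc x False c) (cmp (pc y False x) (pc c False x))))))))"
    by (intro Good_comp GT Good_pc[OF sg] Good_ct[OF sg]) (use V d h dcx dyx in auto)
  show ?thesis
    by (rule finish[OF g vL]) (use d h in \<open>auto simp: cmp_def tv_simp ct_simp pc_simp linv_def\<close>)
qed

lemma caseE3: "b = y \<Longrightarrow> a = c \<Longrightarrow> Good V Adj ZZ LL"
proof -
  assume h: "b = y" "a = c"
  have dcy: "dominates V Adj c y" using d h by simp
  have dxy: "dominates V Adj x y" by (rule dom_trans[OF sg d(3) dcy]) (use d in auto)
  have g: "Good V Adj ZZ (cmp (pc c True y) (cmp (pc x True y) (cmp (pc y True c) (cmp (ct (y, False) (x, True) c)
      (cmp (ct (c, True) (x, True) y) (cmp (pc x False c) (cmp (pc y False c) (pc c False y))))))))"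
    by (intro Good_comp GT Good_pc[OF sg] Good_ct[OF sg]) (use V d h dcy dxy in auto)
  show ?thesis
    by (rule finish[OF g vL]) (use d h in \<open>auto simp: cmp_def tv_simp ct_simp pc_simp linv_def\<close>)
qed

lemma all_cases: "Good V Adj ZZ LL"
proof (cases "b = c")
  case True then show ?thesis by (rule caseA)
next
  case bc: False
  show ?thesis
  proof (cases "b = x")
    case bx: True
    show ?thesis
    proof (cases "a = y")
      case True then show ?thesis using caseD1 bx by blast
    next
      case ay: False
      show ?thesis
      proof (cases "a = c")
        case True then show ?thesis using caseD3 bx by blast
      next
        case False then show ?thesis using caseD2 bx ay by blast
      qed
    qed
  next
    case bx: False
    show ?thesis
    proof (cases "b = y")
      case hby: True
      show ?thesis
      proof (cases "a = x")
        case True then show ?thesis using caseE1 hby by blast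
      next
        case ax: False
        show ?thesis
        proof (cases "a = c")
          case True then show ?thesis using caseE3 hby by blast
        next
          case False then show ?thesis using caseE2 hby ax by blast
        qed
      qed
    next
      case hby: False
      show ?thesis
      proof (cases "a = c")
        case True then show ?thesis using caseC bc bx hby by blast
      next
        case False then show ?thesis using caseB bc bx hby by blast
      qed
    qed
  qed
qed

end


theorem mainTheorem4:
  fixes V :: "'a set" and Adj :: "'a \<Rightarrow> 'a \<Rightarrow> bool" and a b c x y :: 'a
  assumes "simple_graph V Adj"
    and "a \<in> V" "b \<in> V" "c \<in> V" "x \<in> V" "y \<in> V"
    and "dominates V Adj a b" "a \<noteq> b"
    and "dominates V Adj x c" "x \<noteq> c"
    and "dominates V Adj y c" "y \<noteq> c"
    and "x \<noteq> y"
  shows "transv V Adj (a, True) (b, True)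
           \<otimes>\<^bsub>AutoGroup (RAAG V Adj)\<^esub> ctransv V Adj (x, True) (y, True) (c, True)
           \<otimes>\<^bsub>AutoGroup (RAAG V Adj)\<^esub> inv\<^bsub>AutoGroup (RAAG V Adj)\<^esub> transv V Adj (a, True) (b, True)
         \<in> K V Adj {a, b, c, x, y}"
proof -
  have e: "transv V Adj (a, True) (b, True)
           \<otimes>\<^bsub>AutoGroup (RAAG V Adj)\<^esub> ctransv V Adj (x, True) (y, True) (c, True)
           \<otimes>\<^bsub>AutoGroup (RAAG V Adj)\<^esub> inv\<^bsub>AutoGroup (RAAG V Adj)\<^esub> transv V Adj (a, True) (b, True)
         = ind_hom V Adj (cmp (cmp (tv b a True) (ct (x, True) (y, True) c)) (tv b a False))"
    by (rule LHS_eq(1)[OF assms])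
  have "Good V Adj {a, b, c, x, y} (cmp (cmp (tv b a True) (ct (x, True) (y, True) c)) (tv b a False))"
    by (rule all_cases[OF assms])
  then show ?thesis unfolding e by (simp add: Good_def)
qed

end
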